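(* Let $G$ be a finite group. Then $G$ has at least $d(|G|)$ cyclic subgroups, and $G$ has exactly $d(|G|)$ cyclic subgroups if and only if $G$ is cyclic.
   Context: For a positive integer $n$, $d(n)$ denotes the number of positive divisors of $n$. *)

theory Defs
  imports "HOL-Algebra.Elementary_Groups"
begin

definition num_divisors :: "nat \<Rightarrow> nat" where
  "num_divisors n = card {k. k dvd n}"

definition cyclic_subgroups :: "('a, 'b) monoid_scheme \<Rightarrow> 'a set set" where
  "cyclic_subgroups G = {H. \<exists>a \<in> carrier G. H = generate G {a}}"

end

theory Submission
  imports Defs "HOL-Algebra.Multiplicative_Group" "HOL-Algebra.Group_Action" "HOL-Number_Theory.Number_Theory"
begin

definition Lset :: "('a,'b) monoid_scheme \<Rightarrow> nat \<Rightarrow> 'a set" where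
  "Lset G n = {x \<in> carrier G. x [^]\<^bsub>G\<^esub> n = \<one>\<^bsub>G\<^esub>}"

definition tr :: "('a \<Rightarrow> nat) \<Rightarrow> ('a,'b) monoid_scheme \<Rightarrow> nat monoid" where
  "tr f G = \<lparr>carrier = f ` carrier G,
     monoid.mult = (\<lambda>x y. f (inv_into (carrier G) f x \<otimes>\<^bsub>G\<^esub> inv_into (carrier G) f y)),
     one = f \<one>\<^bsub>G\<^esub>\<rparr>"

lemma tr_simps: "carrier (tr f G) = f ` carrier G" "one (tr f G) = f \<one>\<^bsub>G\<^esub>"
  "x \<otimes>\<^bsub>tr f G\<^esub> y = f (inv_into (carrier G) f x \<otimes>\<^bsub>G\<^esub> inv_into (carrier G) f y)"
  by (auto simp: tr_def)

lemma tr_mult_img: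
  assumes "inj_on f (carrier G)" "x \<in> carrier G" "y \<in> carrier G"
  shows "f x \<otimes>\<^bsub>tr f G\<^esub> f y = f (x \<otimes>\<^bsub>G\<^esub> y)"
  using assms by (simp add: tr_simps)

lemma tr_group:
  assumes G: "group G" and inj: "inj_on f (carrier G)"
  shows "group (tr f G)"
proof -
  interpret G: group G by (rule G)
  show ?thesis
  proof (rule groupI)
    fix x y assume "x \<in> carrier (tr f G)" "y \<in> carrier (tr f G)"
    then show "x \<otimes>\<^bsub>tr f G\<^esub> y \<in> carrier (tr f G)"
      by (auto simp: tr_simps inj)
  next
    show "\<one>\<^bsub>tr f G\<^esub> \<in> carrier (tr f G)" by (simp add: tr_simps)
  next
    fix x y z assume "x \<in> carrier (tr f G)" "y \<in> carrier (tr f G)" "z \<in> carrier (tr f G)"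
    then obtain a b c where "a \<in> carrier G" "b \<in> carrier G" "c \<in> carrier G" "x = f a" "y = f b" "z = f c"
      by (auto simp: tr_simps)
    then show "x \<otimes>\<^bsub>tr f G\<^esub> y \<otimes>\<^bsub>tr f G\<^esub> z = x \<otimes>\<^bsub>tr f G\<^esub> (y \<otimes>\<^bsub>tr f G\<^esub> z)"
      by (simp add: tr_mult_img inj G.m_assoc)
  next
    fix x assume "x \<in> carrier (tr f G)"
    then obtain a where "a \<in> carrier G" "x = f a" by (auto simp: tr_simps)
    then show "\<one>\<^bsub>tr f G\<^esub> \<otimes>\<^bsub>tr f G\<^esub> x = x"
      by (metis G.l_one G.one_closed inj tr_mult_img tr_simps(2))
  next
    fix x assume "x \<in> carrier (tr f G)"
    then obtain a where a: "a \<in> carrier G" "x = f a" by (auto simp: tr_simps)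
    show "\<exists>y\<in>carrier (tr f G). y \<otimes>\<^bsub>tr f G\<^esub> x = \<one>\<^bsub>tr f G\<^esub>"
      by (rule bexI[of _ "f (inv\<^bsub>G\<^esub> a)"]) (use a inj in \<open>auto simp: tr_mult_img tr_simps\<close>)
  qed
qed

lemma tr_pow:
  assumes G: "group G" and inj: "inj_on f (carrier G)" and x: "x \<in> carrier G"
  shows "f (x [^]\<^bsub>G\<^esub> (k::nat)) = (f x) [^]\<^bsub>tr f G\<^esub> k"
proof (induction k)
  case 0 then show ?case by (simp add: tr_simps)
next
  case (Suc k)
  interpret G: group G by (rule G)
  show ?case using Suc x by (simp add: tr_mult_img[OF inj, symmetric])
qed

lemma tr_Lset:
  assumes G: "group G" and inj: "inj_on f (carrier G)"
  shows "card (Lset (tr f G) n) = card (Lset G n)"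
proof -
  interpret G: group G by (rule G)
  have "Lset (tr f G) n = f ` Lset G n"
    using inj by (auto simp: Lset_def tr_simps tr_pow[OF G inj, symmetric] inj_on_eq_iff)
  moreover have "inj_on f (Lset G n)" using inj by (rule inj_on_subset) (auto simp: Lset_def)
  ultimately show ?thesis by (simp add: card_image)
qed

lemma tr_card: "inj_on f (carrier G) \<Longrightarrow> card (carrier (tr f G)) = card (carrier G)"
  by (simp add: tr_simps card_image)

context group begin

lemma pow_mod_q:
  assumes x: "x \<in> carrier G" and q: "x [^] (q::nat) = \<one>"
  shows "x [^] (a::nat) = x [^] (a mod q)"
proof -
  have "x [^] a = x [^] (q * (a div q) + a mod q)" by simp
  also have "\<dots> = (x [^] q) [^] (a div q) \<otimes> x [^] (a mod q)"
    using x by (simp only: nat_pow_mult[symmetric] nat_pow_pow)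
  also have "\<dots> = x [^] (a mod q)" using x q by simp
  finally show ?thesis .
qed

lemma pow_cong_q:
  assumes x: "x \<in> carrier G" and q: "x [^] (q::nat) = \<one>" and c: "[a = b] (mod q)"
  shows "x [^] (a::nat) = x [^] b"
  using pow_mod_q[OF x q, of a] pow_mod_q[OF x q, of b] c by (simp add: cong_def)

lemma coprime_pow_one:
  assumes x: "x \<in> carrier G" "x [^] (m::nat) = \<one>" "x [^] (q::nat) = \<one>" and c: "coprime m q"
  shows "x = \<one>"
proof -
  have "ord x dvd m" "ord x dvd q" using x pow_eq_id by auto
  then have "ord x dvd gcd m q" by simp
  with c have "ord x = 1" by simp
  then show ?thesis using x ord_eq_1 by auto
qed

lemma Lset_gcd:
  assumes fin: "finite (carrier G)"
  shows "Lset G n = Lset G (gcd n (order G))"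
proof -
  have "x [^] n = \<one> \<longleftrightarrow> x [^] gcd n (order G) = \<one>" if "x \<in> carrier G" for x
    using that pow_eq_id ord_dvd_group_order[OF that] by (metis dvd_trans gcd_dvd1 gcd_greatest)
  then show ?thesis unfolding Lset_def by auto
qed

definition cent :: "'a \<Rightarrow> 'a set" where
  "cent y = {z \<in> carrier G. z \<otimes> y = y \<otimes> z}"

lemma cent_subgroup:
  assumes y: "y \<in> carrier G"
  shows "subgroup (cent y) G"
proof (rule subgroupI)
  show "cent y \<subseteq> carrier G" by (auto simp: cent_def)
  show "cent y \<noteq> {}" using y by (auto simp: cent_def intro!: exI[of _ \<one>])
next
  fix a assume "a \<in> cent y"
  then have a: "a \<in> carrier G" "a \<otimes> y = y \<otimes> a" by (auto simp: cent_def)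
  have "inv a \<otimes> y = inv a \<otimes> y \<otimes> (a \<otimes> inv a)" using a y by (metis inv_closed m_closed r_one r_inv)
  also have "\<dots> = inv a \<otimes> (y \<otimes> a) \<otimes> inv a" using a y by (simp add: m_assoc)
  also have "\<dots> = inv a \<otimes> (a \<otimes> y) \<otimes> inv a" using a by simp
  also have "\<dots> = y \<otimes> inv a" using a y by (metis inv_closed l_inv l_one m_assoc)
  finally show "inv a \<in> cent y" using a by (simp add: cent_def)
next
  fix a b assume "a \<in> cent y" "b \<in> cent y"
  then show "a \<otimes> b \<in> cent y" using y
    by (auto simp: cent_def m_assoc) (metis m_assoc)
qed

lemma cent_pow:
  assumes y: "y \<in> carrier G" and z: "z \<in> cent y"
  shows "(y [^] (k::nat)) \<otimes> z = z \<otimes> y [^] k"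
  using group_commutes_pow[of y z k] y z by (auto simp: cent_def)

end

context group begin

lemma frobA:
  assumes fin: "finite (carrier G)" and y: "y \<in> carrier G" and q: "ord y = q" "q > 1"
    and cop: "coprime m q"
    and IH: "\<And>Q::nat monoid. group Q \<Longrightarrow> finite (carrier Q) \<Longrightarrow> card (carrier Q) < order G
              \<Longrightarrow> (\<forall>k. k dvd card (carrier Q) \<longrightarrow> k dvd card (Lset Q k))"
  shows "gcd m (card (cent y)) dvd card {z \<in> cent y. z [^] m = \<one>}"
proof -
  define C where "C = cent y"
  have subC: "subgroup C G" using cent_subgroup[OF y] C_def by simp
  define CG where "CG = G\<lparr>carrier := C\<rparr>"
  have grpC: "group CG" unfolding CG_def using subgroup_imp_group[OF subC] .
  interpret CG: group CG by (rule grpC)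
  have CGc[simp]: "carrier CG = C" "monoid.mult CG = monoid.mult G" "one CG = \<one>" by (auto simp: CG_def)
  have powC: "x [^]\<^bsub>CG\<^esub> (k::nat) = x [^] k" for x k
    unfolding CG_def by (rule nat_pow_consistent[symmetric])
  have rc: "r_coset CG Y x = Y #> x" for Y x by (simp add: r_coset_def)
  define Y where "Y = generate G {y}"
  have Yeq: "Y = {y [^] k | k. k \<in> (UNIV::nat set)}"
    using generate_pow_on_finite_carrier[OF fin y] Y_def by simp
  have cardY: "card Y = q" using generate_pow_card[OF y] q Y_def by simp
  have subY: "subgroup Y G" unfolding Y_def using y generate_is_subgroup by auto
  have yC: "y \<in> C" using y by (simp add: C_def cent_def)
  have CG_sub: "C \<subseteq> carrier G" using subC subgroup.subset by blast
  have YC: "Y \<subseteq> C" unfolding Y_def using generate_subgroup_incl[OF _ subC] yC by simp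
  have central: "c \<otimes> z = z \<otimes> c" if cY: "c \<in> Y" and zC: "z \<in> C" for c z
  proof -
    obtain k where "c = y [^] (k::nat)" using Yeq cY by auto
    then show ?thesis using cent_pow[OF y, of z k] zC C_def by simp
  qed
  have YqY: "c [^] q = \<one>" if "c \<in> Y" for c
  proof -
    obtain k where "c = y [^] (k::nat)" using Yeq \<open>c \<in> Y\<close> by auto
    moreover have "y [^] q = \<one>" using q y pow_ord_eq_1 by blast
    ultimately show ?thesis using y by (metis nat_pow_pow mult.commute nat_pow_one)
  qed
  have subYC: "subgroup Y CG" unfolding CG_def by (rule subgroup_incl[OF subY subC YC])
  have normY: "Y \<lhd> CG"
  proof (rule CG.normalI[OF subYC], intro ballI)
    fix x assume x: "x \<in> carrier CG"
    show "Y #>\<^bsub>CG\<^esub> x = x <#\<^bsub>CG\<^esub> Y"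
    proof -
      have "{h \<otimes> x |h. h \<in> Y} = {x \<otimes> h |h. h \<in> Y}"
        using central x by (metis CGc(1))
      then show ?thesis by (simp add: r_coset_def l_coset_def, blast)
    qed
  qed
  interpret N: normal Y CG by (rule normY)
  define Q where "Q = CG Mod Y"
  have grpQ: "group Q" unfolding Q_def by (rule N.factorgroup_is_group)
  interpret Q: group Q by (rule grpQ)
  have carQ: "carrier Q = rcosets\<^bsub>CG\<^esub> Y" by (simp add: Q_def FactGroup_def)
  have finC: "finite C" using fin CG_sub finite_subset by blast
  have lag: "card (carrier Q) * q = card C"
    using CG.lagrange[OF subYC] carQ cardY by (simp add: order_def)
  have finQ: "finite (carrier Q)"
    unfolding Q_def carrier_FactGroup using finC by simp
  have Cpos: "card C > 0" using finC yC by (auto simp: card_gt_0_iff)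
  have CleG: "card C \<le> order G" unfolding order_def using fin CG_sub card_mono by blast
  have Qlt: "card (carrier Q) < order G"
  proof -
    have "card (carrier Q) < card (carrier Q) * q" using lag Cpos q(2) by (metis mult.right_neutral
       mult_less_cancel1 bot_nat_0.not_eq_extremum mult_0)
    then show ?thesis using lag CleG by simp
  qed
  define A where "A = {z \<in> C. z [^] m = \<one>}"
  have powQ: "(Y #> z) [^]\<^bsub>Q\<^esub> (k::nat) = Y #> (z [^] k)" if "z \<in> C" for z k
    using N.FactGroup_pow[of z k] that by (simp add: Q_def rc powC)
  have oneQ: "\<one>\<^bsub>Q\<^esub> = Y" by (simp add: Q_def)
  have bij: "bij_betw (\<lambda>z. Y #> z) A (Lset Q m)"
  proof (rule bij_betwI')
    fix z assume "z \<in> A"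
    then have z: "z \<in> C" "z [^] m = \<one>" by (auto simp: A_def)
    have "Y #> z \<in> carrier Q" unfolding carQ RCOSETS_def using z(1) by (auto simp: rc)
    moreover have "(Y #> z) [^]\<^bsub>Q\<^esub> m = \<one>\<^bsub>Q\<^esub>"
      using z powQ oneQ subY by (simp add: subgroup.subset coset_mult_one)
    ultimately show "Y #> z \<in> Lset Q m" by (simp add: Lset_def)
  next
    fix z z' assume zA: "z \<in> A" "z' \<in> A"
    then have z: "z \<in> C" "z [^] m = \<one>" "z' \<in> C" "z' [^] m = \<one>" by (auto simp: A_def)
    then have zc: "z \<in> carrier G" "z' \<in> carrier G" using CG_sub by auto
    show "(Y #> z = Y #> z') = (z = z')"
    proof
      assume eq: "Y #> z = Y #> z'"
      have "z' \<in> Y #> z" using eq repr_independenceD[OF subY zc(2)] by simp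
      then obtain c where c: "c \<in> Y" "z' = c \<otimes> z" by (auto simp: r_coset_def)
      have cc: "c \<in> carrier G" using c subY subgroup.subset by blast
      have "z' [^] m = c [^] m \<otimes> z [^] m"
        using c cc zc central[OF c(1) z(1)] pow_mult_distrib by simp
      then have "c [^] m = \<one>" using z cc by simp
      then have "c = \<one>" using coprime_pow_one[OF cc _ YqY[OF c(1)] cop] by simp
      then show "z = z'" using c zc by simp
    qed simp
  next
    fix X assume XL: "X \<in> Lset Q m"
    then have X: "X \<in> carrier Q" "X [^]\<^bsub>Q\<^esub> m = Y" by (auto simp: Lset_def oneQ)
    from X(1) obtain g where g: "g \<in> C" "X = Y #> g"
      unfolding carQ RCOSETS_def rc by auto
    have gc: "g \<in> carrier G" using g CG_sub by auto
    have gmc: "g [^] m \<in> carrier G" using gc by simp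
    have "Y #> (g [^] m) = Y" using X(2) powQ[OF g(1)] g(2) by simp
    then have gmY: "g [^] m \<in> Y" using rcos_self[OF gmc subY] by simp
    obtain u where u: "[m * u = Suc 0] (mod q)" using cong_solve_coprime_nat[OF cop] by blast
    define w where "w = (g [^] m) [^] u"
    have wY: "w \<in> Y"
    proof -
      obtain k where k: "g [^] m = y [^] (k::nat)" using gmY Yeq by auto
      have "w = y [^] (k * u)" using y by (simp add: w_def k nat_pow_pow)
      then show ?thesis using Yeq by blast
    qed
    have wc: "w \<in> carrier G" using wY subY subgroup.subset by blast
    have iwY: "inv w \<in> Y" by (rule subgroup.m_inv_closed[OF subY wY])
    have iwc: "inv w \<in> carrier G" by (rule inv_closed[OF wc])
    have wm: "w [^] m = g [^] m"
    proof -
      have "w [^] m = (g [^] m) [^] (m * u)" using gc by (simp add: w_def nat_pow_pow mult.commute)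
      also have "\<dots> = (g [^] m) [^] (Suc 0)"
        by (rule pow_cong_q[OF gmc YqY[OF gmY] u])
      finally show ?thesis using gc by simp
    qed
    define z where "z = g \<otimes> inv w"
    have zC: "z \<in> C" unfolding z_def using g(1) iwY YC subgroup.m_closed[OF subC] by blast
    have "z [^] m = g [^] m \<otimes> (inv w) [^] m"
      unfolding z_def by (rule pow_mult_distrib[OF central[OF iwY g(1), symmetric] gc iwc])
    also have "\<dots> = \<one>" using wm gc wc by (simp add: nat_pow_inv)
    finally have zA: "z \<in> A" using zC by (simp add: A_def)
    have "Y #> z = Y #> (inv w \<otimes> g)" by (simp only: z_def central[OF iwY g(1)])
    also have "\<dots> = (Y #> inv w) #> g" using subY iwc gc by (simp add: coset_mult_assoc subgroup.subset)
    also have "\<dots> = Y #> g" using subgroup.rcos_const[OF subY is_group iwY] by simp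
    finally show "\<exists>z\<in>A. X = Y #> z" using zA g by auto
  qed
  have cardA: "card A = card (Lset Q m)" using bij bij_betw_same_card by blast
  obtain f :: "'a set \<Rightarrow> nat" where f: "inj_on f (carrier Q)"
    using finite_imp_inj_to_nat_seg[OF finQ] by blast
  define T where "T = tr f Q"
  have grpT: "group T" unfolding T_def by (rule tr_group[OF grpQ f])
  have cT: "card (carrier T) = card (carrier Q)" unfolding T_def by (rule tr_card[OF f])
  have finT: "finite (carrier T)" using finQ by (simp add: T_def tr_simps)
  have "gcd m (card (carrier Q)) dvd card (Lset T (gcd m (card (carrier Q))))"
    using IH[OF grpT finT] cT Qlt by simp
  also have "card (Lset T (gcd m (card (carrier Q)))) = card (Lset Q (gcd m (order Q)))"
    unfolding T_def using tr_Lset[OF grpQ f] by (simp add: order_def)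
  also have "Lset Q (gcd m (order Q)) = Lset Q m" using Q.Lset_gcd[OF finQ] by simp
  finally have "gcd m (card (carrier Q)) dvd card A" using cardA by simp
  moreover have "gcd m (card C) = gcd m (card (carrier Q))"
    using lag[symmetric] cop by (simp add: gcd_mult_right_right_cancel)
  ultimately show ?thesis by (simp add: A_def C_def)
qed

end

lemma totient_alt:
  assumes "N \<ge> 1"
  shows "card {k \<in> {0..N-1}. coprime k N} = totient N"
proof (cases "N = 1")
  case True
  then have "{k \<in> {0..N-1}. coprime k N} = {0}" by simp
  then show ?thesis using True by simp
next
  case False
  then have N: "N > 1" using assms by simp
  have "{k \<in> {0..N-1}. coprime k N} = totatives N"
  proof (rule Set.set_eqI, rule iffI)
    fix k assume "k \<in> {k \<in> {0..N-1}. coprime k N}"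
    then have k: "k \<le> N - 1" "coprime k N" by auto
    have "k \<noteq> 0"
    proof
      assume "k = 0" with k N show False by simp
    qed
    then show "k \<in> totatives N" using k N by (simp add: in_totatives_iff)
  next
    fix k assume "k \<in> totatives N"
    then have k: "0 < k" "k \<le> N" "coprime k N" by (auto simp: in_totatives_iff)
    have "k \<noteq> N"
    proof
      assume "k = N" with k N show False by simp
    qed
    then show "k \<in> {k \<in> {0..N-1}. coprime k N}" using k by simp
  qed
  then show ?thesis by (simp add: totient_def)
qed
lemma dvd_sum_blocks:
  assumes fin: "finite E"
    and rfl: "\<And>y. y \<in> E \<Longrightarrow> y \<in> B y"
    and sub: "\<And>y. y \<in> E \<Longrightarrow> B y \<subseteq> E"
    and eqv: "\<And>y z. y \<in> E \<Longrightarrow> z \<in> B y \<Longrightarrow> B z = B y"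
    and const: "\<And>y z. y \<in> E \<Longrightarrow> z \<in> B y \<Longrightarrow> F z = F y"
    and dv: "\<And>y. y \<in> E \<Longrightarrow> (k::nat) dvd card (B y) * F y"
  shows "k dvd (\<Sum>y\<in>E. F y)"
proof -
  have "(\<Sum>y\<in>E. F y) = (\<Sum>b\<in>B ` E. sum F {x \<in> E. B x = b})"
    by (rule sum.image_gen[OF fin])
  also have "\<dots> = (\<Sum>b\<in>B ` E. sum F b)"
  proof (rule sum.cong[OF refl])
    fix b assume "b \<in> B ` E"
    then obtain y where y: "y \<in> E" "b = B y" by auto
    have "{x \<in> E. B x = b} = b"
    proof
      show "{x \<in> E. B x = b} \<subseteq> b"
      proof
        fix x assume "x \<in> {x \<in> E. B x = b}"
        then have "x \<in> E" "B x = b" by simp_all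
        then show "x \<in> b" using rfl[of x] by simp
      qed
      show "b \<subseteq> {x \<in> E. B x = b}"
      proof
        fix x assume "x \<in> b"
        then have "x \<in> E" "B x = b" using y sub[of y] eqv[of y x] by auto
        then show "x \<in> {x \<in> E. B x = b}" by simp
      qed
    qed
    then show "sum F {x \<in> E. B x = b} = sum F b" by simp
  qed
  finally have eq: "(\<Sum>y\<in>E. F y) = (\<Sum>b\<in>B ` E. sum F b)" .
  have "k dvd sum F b" if "b \<in> B ` E" for b
  proof -
    obtain y where y: "y \<in> E" "b = B y" using \<open>b \<in> B ` E\<close> by auto
    have "sum F (B y) = (\<Sum>z\<in>B y. F y)" using const[OF y(1)] by (rule sum.cong[OF refl])
    also have "\<dots> = card (B y) * F y" by simp
    finally show ?thesis using dv[OF y(1)] y(2) by simp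
  qed
  then show ?thesis unfolding eq by (rule dvd_sum)
qed

context group begin

lemma gen_count:
  assumes fin: "finite (carrier G)" and y: "y \<in> carrier G"
  shows "card {z \<in> generate G {y}. ord z = ord y} = totient (ord y)"
proof -
  have o1: "ord y \<ge> 1" using ord_ge_1[OF fin y] .
  have gen: "generate G {y} = (\<lambda>k. y [^] k) ` {0..ord y - 1}"
    using generate_pow_on_finite_carrier[OF fin y] ord_elems[OF fin y] by auto
  have "{z \<in> generate G {y}. ord z = ord y} = (\<lambda>k. y [^] k) ` {k \<in> {0..ord y - 1}. coprime k (ord y)}"
    unfolding gen using pow_ord_eq_ord_iff[OF fin y] by auto
  moreover have "inj_on (\<lambda>k. y [^] k) {k \<in> {0..ord y - 1}. coprime k (ord y)}"
    using ord_inj[OF y] by (rule inj_on_subset) auto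
  ultimately have "card {z \<in> generate G {y}. ord z = ord y} = card {k \<in> {0..ord y - 1}. coprime k (ord y)}"
    by (simp add: card_image)
  also have "\<dots> = totient (ord y)" using totient_alt[OF o1] .
  finally show ?thesis .
qed

lemma cancel_mid:
  assumes "a \<in> carrier G" "b \<in> carrier G" "g \<in> carrier G"
  shows "a \<otimes> inv g \<otimes> (g \<otimes> b) = a \<otimes> b"
  using assms by (metis m_assoc l_inv r_one inv_closed m_closed one_closed)

lemma conj_pow:
  assumes g: "g \<in> carrier G" and z: "z \<in> carrier G"
  shows "(g \<otimes> z \<otimes> inv g) [^] (k::nat) = g \<otimes> z [^] k \<otimes> inv g"
proof (induction k)
  case 0 then show ?case using g by simp
next
  case (Suc k)
  have "(g \<otimes> z \<otimes> inv g) [^] Suc k = (g \<otimes> z [^] k \<otimes> inv g) \<otimes> (g \<otimes> z \<otimes> inv g)"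
    using Suc by simp
  also have "\<dots> = (g \<otimes> z [^] k) \<otimes> inv g \<otimes> (g \<otimes> (z \<otimes> inv g))"
    using g z by (simp only: m_assoc m_closed inv_closed nat_pow_closed)
  also have "\<dots> = (g \<otimes> z [^] k) \<otimes> (z \<otimes> inv g)"
    using g z by (simp only: cancel_mid m_closed inv_closed nat_pow_closed)
  also have "\<dots> = g \<otimes> (z [^] k \<otimes> z) \<otimes> inv g"
    using g z by (simp only: m_assoc m_closed inv_closed nat_pow_closed)
  also have "\<dots> = g \<otimes> z [^] Suc k \<otimes> inv g"
    using g z by simp
  finally show ?case .
qed

lemma ord_conj:
  assumes g: "g \<in> carrier G" and z: "z \<in> carrier G"
  shows "ord (g \<otimes> z \<otimes> inv g) = ord z"
proof -
  have "(g \<otimes> z \<otimes> inv g) [^] n = \<one> \<longleftrightarrow> z [^] n = \<one>" for n :: nat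
  proof -
    have "(g \<otimes> z \<otimes> inv g) [^] n = \<one> \<longleftrightarrow> g \<otimes> z [^] n \<otimes> inv g = g \<otimes> \<one> \<otimes> inv g"
      using conj_pow[OF g z] g by (metis r_one r_inv one_closed)
    also have "\<dots> \<longleftrightarrow> z [^] n = \<one>" using g z conjugation_is_inj[of g "z [^] n" \<one>] by auto
    finally show ?thesis .
  qed
  then show ?thesis using ord_unique[of "g \<otimes> z \<otimes> inv g" "ord z"] g z pow_eq_id by simp
qed

end

lemma dvd_mult_gcd_aux:
  fixes m A B :: nat
  assumes "m dvd A * B"
  shows "m dvd A * gcd m B"
proof -
  have "A * gcd m B = gcd (A * m) (A * B)" by (rule gcd_mult_distrib_nat)
  moreover have "m dvd gcd (A * m) (A * B)" using assms by simp
  ultimately show ?thesis by simp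
qed

context group begin

lemma conj_fix_iff:
  assumes g: "g \<in> carrier G" and y: "y \<in> carrier G"
  shows "g \<otimes> y \<otimes> inv g = y \<longleftrightarrow> g \<otimes> y = y \<otimes> g"
proof
  assume h: "g \<otimes> y \<otimes> inv g = y"
  have "g \<otimes> y = g \<otimes> y \<otimes> inv g \<otimes> g" using g y by (simp add: m_assoc)
  then show "g \<otimes> y = y \<otimes> g" using h by simp
next
  assume h: "g \<otimes> y = y \<otimes> g"
  then have "g \<otimes> y \<otimes> inv g = y \<otimes> g \<otimes> inv g" by simp
  also have "\<dots> = y" using g y by (simp add: m_assoc)
  finally show "g \<otimes> y \<otimes> inv g = y" .
qed

lemma conj_mult:
  assumes g: "g \<in> carrier G" and a: "a \<in> carrier G" and b: "b \<in> carrier G"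
  shows "g \<otimes> (a \<otimes> b) \<otimes> inv g = (g \<otimes> a \<otimes> inv g) \<otimes> (g \<otimes> b \<otimes> inv g)"
proof -
  have "(g \<otimes> a \<otimes> inv g) \<otimes> (g \<otimes> b \<otimes> inv g) = (g \<otimes> a) \<otimes> inv g \<otimes> (g \<otimes> (b \<otimes> inv g))"
    using g a b by (simp only: m_assoc m_closed inv_closed)
  also have "\<dots> = (g \<otimes> a) \<otimes> (b \<otimes> inv g)" using g a b by (simp only: cancel_mid m_closed inv_closed)
  also have "\<dots> = g \<otimes> (a \<otimes> b) \<otimes> inv g" using g a b by (simp only: m_assoc m_closed inv_closed)
  finally show ?thesis by simp
qed

lemma conj_conj:
  assumes g: "g \<in> carrier G" and h: "h \<in> carrier G" and y: "y \<in> carrier G"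
  shows "g \<otimes> (h \<otimes> y \<otimes> inv h) \<otimes> inv g = (g \<otimes> h) \<otimes> y \<otimes> inv (g \<otimes> h)"
  using g h y by (simp add: inv_mult_group m_assoc)

lemma conj_inv_cancel:
  assumes g: "g \<in> carrier G" and y: "y \<in> carrier G"
  shows "inv g \<otimes> (g \<otimes> y \<otimes> inv g) \<otimes> inv (inv g) = y"
proof -
  have "inv g \<otimes> (g \<otimes> y \<otimes> inv g) \<otimes> inv (inv g) = (inv g \<otimes> g) \<otimes> y \<otimes> (inv g \<otimes> g)"
    using g y by (simp only: m_assoc inv_inv m_closed inv_closed)
  then show ?thesis using g y by simp
qed

lemma cent_conj:
  assumes g: "g \<in> carrier G" and y: "y \<in> carrier G" and z: "z \<in> cent y"
  shows "g \<otimes> z \<otimes> inv g \<in> cent (g \<otimes> y \<otimes> inv g)"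
proof -
  have zc: "z \<in> carrier G" and zy: "z \<otimes> y = y \<otimes> z" using z by (auto simp: cent_def)
  have "(g \<otimes> z \<otimes> inv g) \<otimes> (g \<otimes> y \<otimes> inv g) = g \<otimes> (z \<otimes> y) \<otimes> inv g"
    using conj_mult[OF g zc y] by simp
  also have "\<dots> = g \<otimes> (y \<otimes> z) \<otimes> inv g" using zy by simp
  also have "\<dots> = (g \<otimes> y \<otimes> inv g) \<otimes> (g \<otimes> z \<otimes> inv g)" using conj_mult[OF g y zc] by simp
  finally show ?thesis using g zc by (simp add: cent_def)
qed

lemma S_conj_sub:
  fixes m :: nat
  assumes g: "g \<in> carrier G" and y: "y \<in> carrier G"
  shows "(\<lambda>z. g \<otimes> z \<otimes> inv g) ` {z \<in> cent y. z [^] m = \<one>} \<subseteq> {z \<in> cent (g \<otimes> y \<otimes> inv g). z [^] m = \<one>}"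
proof
  fix x assume "x \<in> (\<lambda>z. g \<otimes> z \<otimes> inv g) ` {z \<in> cent y. z [^] m = \<one>}"
  then obtain z where z: "z \<in> cent y" "z [^] m = \<one>" "x = g \<otimes> z \<otimes> inv g" by auto
  have zc: "z \<in> carrier G" using z by (simp add: cent_def)
  have "x [^] m = \<one>" using z conj_pow[OF g zc, of m] g by simp
  then show "x \<in> {z \<in> cent (g \<otimes> y \<otimes> inv g). z [^] m = \<one>}" using cent_conj[OF g y z(1)] z(3) by simp
qed

lemma S_conj_card:
  fixes m :: nat
  assumes fin: "finite (carrier G)" and g: "g \<in> carrier G" and y: "y \<in> carrier G"
  shows "card {z \<in> cent (g \<otimes> y \<otimes> inv g). z [^] m = \<one>} = card {z \<in> cent y. z [^] m = \<one>}"
proof -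
  define S where "S = (\<lambda>y. {z \<in> cent y. z [^] m = \<one>})"
  have finS: "finite (S x)" for x using fin by (rule finite_subset[rotated]) (auto simp: S_def cent_def)
  have inj: "inj_on (\<lambda>z. h \<otimes> z \<otimes> inv h) (S x)" if "h \<in> carrier G" for h x
    by (rule inj_onI) (use that in \<open>auto simp: S_def cent_def intro: conjugation_is_inj\<close>)
  have gy: "g \<otimes> y \<otimes> inv g \<in> carrier G" using g y by simp
  have "card (S y) \<le> card (S (g \<otimes> y \<otimes> inv g))"
    using card_inj_on_le[OF inj[OF g] _ finS] S_conj_sub[OF g y] by (simp add: S_def)
  moreover have "card (S (g \<otimes> y \<otimes> inv g)) \<le> card (S y)"
  proof -
    have "card (S (g \<otimes> y \<otimes> inv g)) \<le> card (S (inv g \<otimes> (g \<otimes> y \<otimes> inv g) \<otimes> inv (inv g)))"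
      using card_inj_on_le[OF inj[OF inv_closed[OF g]] _ finS] S_conj_sub[OF inv_closed[OF g] gy]
      by (simp add: S_def)
    then show ?thesis using conj_inv_cancel[OF g y] by simp
  qed
  ultimately show ?thesis by (simp add: S_def)
qed

lemma gen_eq:
  assumes fin: "finite (carrier G)" and y: "y \<in> carrier G" and z: "z \<in> generate G {y}" and o: "ord z = ord y"
  shows "generate G {z} = generate G {y}"
proof -
  have sub: "subgroup (generate G {y}) G" using y generate_is_subgroup by auto
  have zc: "z \<in> carrier G" using z sub subgroup.subset by blast
  have "generate G {z} \<subseteq> generate G {y}" using generate_subgroup_incl[OF _ sub] z by simp
  moreover have "finite (generate G {y})" using fin sub subgroup.subset finite_subset by blast
  moreover have "card (generate G {z}) = card (generate G {y})"
    using generate_pow_card[OF y] generate_pow_card[OF zc] o by simp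
  ultimately show ?thesis by (simp add: card_subset_eq)
qed

lemma cent_gen:
  assumes fin: "finite (carrier G)" and y: "y \<in> carrier G" and z: "z \<in> generate G {y}"
    and w: "w \<in> cent y"
  shows "w \<in> cent z"
proof -
  obtain k where k: "z = y [^] (k::nat)" using z generate_pow_on_finite_carrier[OF fin y] by auto
  show ?thesis using cent_pow[OF y w, of k] w k by (simp add: cent_def)
qed

lemma cent_eq:
  assumes fin: "finite (carrier G)" and y: "y \<in> carrier G" and z: "z \<in> carrier G"
    and eq: "generate G {z} = generate G {y}"
  shows "cent z = cent y"
proof
  have zy: "z \<in> generate G {y}" using eq generate.incl[of z "{z}" G] by auto
  have yz: "y \<in> generate G {z}" using eq generate.incl[of y "{y}" G] by auto
  show "cent y \<subseteq> cent z" using cent_gen[OF fin y zy] by auto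
  show "cent z \<subseteq> cent y" using cent_gen[OF fin z yz] by auto
qed

end

context group begin

lemma frob_step:
  assumes fin: "finite (carrier G)" and p: "prime p" and pn: "p * n dvd order G" and npos: "n > 0"
    and IHn: "p * n dvd card (Lset G (p * n))"
    and IH: "\<And>Q::nat monoid. group Q \<Longrightarrow> finite (carrier Q) \<Longrightarrow> card (carrier Q) < order G
              \<Longrightarrow> (\<forall>k. k dvd card (carrier Q) \<longrightarrow> k dvd card (Lset Q k))"
  shows "n dvd card (Lset G n)"
proof -
  define a where "a = multiplicity p n"
  define m where "m = n div p ^ a"
  have pa_dvd: "p ^ a dvd n" unfolding a_def by (rule multiplicity_dvd)
  have nm: "n = p ^ a * m" using pa_dvd by (simp add: m_def)
  have mpos: "m > 0" using nm npos by (metis gr0I mult_0_right)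
  have pnu: "\<not> is_unit p" using p not_prime_unit by blast
  have "p ^ Suc a dvd n \<longleftrightarrow> Suc a \<le> multiplicity p n"
    by (rule power_dvd_iff_le_multiplicity) (use npos pnu in auto)
  then have not_dvd: "\<not> p ^ Suc a dvd n" unfolding a_def by simp
  have pm: "\<not> p dvd m"
  proof
    assume "p dvd m"
    then have "p ^ Suc a dvd n" using nm by (simp add: mult_dvd_mono)
    with not_dvd show False by simp
  qed
  define q where "q = p ^ Suc a"
  have cop: "coprime m q" unfolding q_def using prime_imp_coprime[OF p pm] by (simp add: ac_simps)
  have copq: "coprime q m" using cop by (simp add: ac_simps)
  have q1: "q > 1" unfolding q_def using p prime_gt_1_nat by (metis one_less_power zero_less_Suc)
  have pnqm: "p * n = q * m" unfolding q_def using nm by simp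
  have qn: "\<not> q dvd n" using not_dvd q_def by simp
  have mn: "m dvd n" using nm by simp
  have mG: "m dvd order G" using mn pn by (meson dvd_mult_right dvd_trans)
  obtain t where t: "[m * t = Suc 0] (mod q)" using cong_solve_coprime_nat[OF cop] by blast
  obtain w where w: "[q * w = Suc 0] (mod m)" using cong_solve_coprime_nat[OF copq] by blast
  define E where "E = {y \<in> carrier G. ord y = q}"
  define S where "S = (\<lambda>y. {z \<in> cent y. z [^] m = \<one>})"
  define F where "F = (\<lambda>y. card (S y))"
  define D where "D = Lset G (p * n) - Lset G n"
  have finE: "finite E" using fin by (simp add: E_def)
  have finS: "finite (S y)" for y using fin by (rule finite_subset[rotated]) (auto simp: S_def cent_def)
  have sub12: "Lset G n \<subseteq> Lset G (p * n)"
    by (auto simp: Lset_def nat_pow_pow[symmetric] mult.commute[of p n] simp del: nat_pow_pow)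
  have fin2: "finite (Lset G (p * n))" using fin by (rule finite_subset[rotated]) (auto simp: Lset_def)
  have card12: "card (Lset G (p * n)) = card (Lset G n) + card D"
    unfolding D_def using card_Diff_subset[OF finite_subset[OF sub12 fin2] sub12]
      card_mono[OF fin2 sub12] by simp
  have yq: "y [^] q = \<one>" if "y \<in> E" for y using that pow_ord_eq_1[of y] by (auto simp: E_def)
  have cardD: "card D = (\<Sum>y\<in>E. F y)"
  proof -
    have bij: "bij_betw (\<lambda>(y, z). y \<otimes> z) (Sigma E S) D"
    proof (rule bij_betwI')
      fix yz assume "yz \<in> Sigma E S"
      then obtain y z where yz: "yz = (y, z)" "y \<in> E" "z \<in> S y" by auto
      have yc: "y \<in> carrier G" and oy: "ord y = q" using yz by (auto simp: E_def)
      have zc: "z \<in> carrier G" and zy: "z \<otimes> y = y \<otimes> z" and zm: "z [^] m = \<one>"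
        using yz by (auto simp: S_def cent_def)
      have yqq: "y [^] q = \<one>" using yq yz(2) .
      have dist: "(y \<otimes> z) [^] k = y [^] k \<otimes> z [^] k" for k :: nat
        using pow_mult_distrib[OF zy[symmetric] yc zc] .
      have "(y \<otimes> z) [^] (p * n) = \<one>"
      proof -
        have "y [^] (q * m) = \<one>" using yqq yc by (simp add: nat_pow_pow[symmetric])
        moreover have "z [^] (q * m) = \<one>" using zm zc by (simp add: nat_pow_pow[symmetric] mult.commute[of q])
        ultimately show ?thesis using dist pnqm yc zc by simp
      qed
      moreover have "(y \<otimes> z) [^] n \<noteq> \<one>"
      proof
        assume h: "(y \<otimes> z) [^] n = \<one>"
        have "z [^] n = \<one>" using zm zc nm by (simp add: nat_pow_pow[symmetric] mult.commute[of "p ^ a"])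
        then have "y [^] n = \<one>" using h dist yc zc by simp
        then have "q dvd n" using pow_eq_id[OF yc] oy by simp
        with qn show False by simp
      qed
      ultimately show "(case yz of (y, z) \<Rightarrow> y \<otimes> z) \<in> D"
        using yz yc zc by (simp add: D_def Lset_def)
    next
      fix yz yz' assume h1: "yz \<in> Sigma E S" "yz' \<in> Sigma E S"
      obtain y z where yz: "yz = (y, z)" "y \<in> E" "z \<in> S y" using h1(1) by auto
      obtain y' z' where yz': "yz' = (y', z')" "y' \<in> E" "z' \<in> S y'" using h1(2) by auto
      have rec: "(u \<otimes> v) [^] (m * t) = u" if "u \<in> E" "v \<in> S u" for u v
      proof -
        have uc: "u \<in> carrier G" and vc: "v \<in> carrier G" and vu: "v \<otimes> u = u \<otimes> v" and vm: "v [^] m = \<one>"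
          using that by (auto simp: S_def cent_def E_def)
        have "(u \<otimes> v) [^] (m * t) = u [^] (m * t) \<otimes> v [^] (m * t)"
          using pow_mult_distrib[OF vu[symmetric] uc vc] .
        also have "v [^] (m * t) = \<one>" using vm vc by (simp add: nat_pow_pow[symmetric])
        also have "u [^] (m * t) = u [^] (Suc 0)" by (rule pow_cong_q[OF uc yq[OF that(1)] t])
        finally show ?thesis using uc by simp
      qed
      show "((case yz of (y, z) \<Rightarrow> y \<otimes> z) = (case yz' of (y, z) \<Rightarrow> y \<otimes> z)) = (yz = yz')"
      proof
        assume "(case yz of (y, z) \<Rightarrow> y \<otimes> z) = (case yz' of (y, z) \<Rightarrow> y \<otimes> z)"
        then have e: "y \<otimes> z = y' \<otimes> z'" using yz yz' by simp
        have "y = y'" using rec[OF yz(2,3)] rec[OF yz'(2,3)] e by simp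
        moreover have "z = z'" using e \<open>y = y'\<close> yz yz'
          by (auto simp: S_def cent_def E_def)
        ultimately show "yz = yz'" using yz yz' by simp
      qed simp
    next
      fix x assume "x \<in> D"
      then have xc: "x \<in> carrier G" and xpn: "x [^] (p * n) = \<one>" and xn: "x [^] n \<noteq> \<one>"
        by (auto simp: D_def Lset_def)
      have xqm: "x [^] (q * m) = \<one>" using xpn pnqm by simp
      define y where "y = x [^] (m * t)"
      define z where "z = x [^] (q * w)"
      have yc: "y \<in> carrier G" and zc: "z \<in> carrier G" using xc by (auto simp: y_def z_def)
      have comm: "x [^] (i::nat) \<otimes> x [^] (j::nat) = x [^] j \<otimes> x [^] i" for i j
        using xc by (simp add: nat_pow_mult add.commute)
      have c1: "[m * t + q * w = Suc 0 + 0] (mod q)"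
        by (rule cong_add[OF t]) (simp add: cong_0_iff)
      have c2: "[m * t + q * w = 0 + Suc 0] (mod m)"
        by (rule cong_add[OF _ w]) (simp add: cong_0_iff)
      have c: "[m * t + q * w = Suc 0] (mod q * m)"
        using coprime_cong_mult_nat[of _ _ q m] c1 c2 copq by simp
      have xyz: "y \<otimes> z = x"
      proof -
        have "y \<otimes> z = x [^] (m * t + q * w)" using xc by (simp add: y_def z_def nat_pow_mult)
        also have "\<dots> = x [^] (Suc 0)" by (rule pow_cong_q[OF xc xqm c])
        finally show ?thesis using xc by simp
      qed
      have zm: "z [^] m = \<one>"
      proof -
        have "z [^] m = (x [^] (q * m)) [^] w" using xc by (simp add: z_def nat_pow_pow ac_simps)
        then show ?thesis using xqm by simp
      qed
      have zcent: "z \<in> cent y" using zc comm by (simp add: cent_def y_def z_def)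
      have yqq: "y [^] q = \<one>"
      proof -
        have "y [^] q = (x [^] (q * m)) [^] t" using xc by (simp add: y_def nat_pow_pow ac_simps)
        then show ?thesis using xqm by simp
      qed
      have oy: "ord y = q"
      proof -
        have "ord y dvd p ^ Suc a" using yqq pow_eq_id[OF yc] q_def by simp
        then obtain i where i: "i \<le> Suc a" "ord y = p ^ i" using divides_primepow_nat[OF p] by blast
        show ?thesis
        proof (cases "i = Suc a")
          case True then show ?thesis using i q_def by simp
        next
          case False
          then have "i \<le> a" using i by simp
          then have "ord y dvd p ^ a" using i by (simp add: le_imp_power_dvd)
          then have "ord y dvd n" using pa_dvd by (rule dvd_trans)
          then have yn: "y [^] n = \<one>" using pow_eq_id[OF yc] by simp
          have zn: "z [^] n = \<one>" using zm zc nm by (simp add: nat_pow_pow[symmetric] mult.commute[of "p ^ a"])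
          have yz_comm: "y \<otimes> z = z \<otimes> y" using comm by (simp add: y_def z_def)
          have "x [^] n = y [^] n \<otimes> z [^] n" using pow_mult_distrib[OF yz_comm yc zc] xyz by simp
          then have "x [^] n = \<one>" using yn zn by simp
          with xn show ?thesis by simp
        qed
      qed
      have "(y, z) \<in> Sigma E S" using yc oy zcent zm by (simp add: E_def S_def)
      then show "\<exists>yz\<in>Sigma E S. x = (case yz of (y, z) \<Rightarrow> y \<otimes> z)" using xyz by force
    qed
    have "card D = card (Sigma E S)" using bij_betw_same_card[OF bij] by simp
    also have "\<dots> = (\<Sum>y\<in>E. card (S y))" using card_SigmaI[OF finE, of S] finS by blast
    finally show ?thesis by (simp add: F_def)
  qed
  have Ec: "y \<in> carrier G" "ord y = q" if "y \<in> E" for y using that by (auto simp: E_def)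
  define B1 where "B1 = (\<lambda>y. {z \<in> generate G {y}. ord z = ord y})"
  have gensub: "generate G {y} \<subseteq> carrier G" if "y \<in> carrier G" for y
    using that generate_is_subgroup[of "{y}"] subgroup.subset by auto
  have dvdp: "p ^ a dvd (\<Sum>y\<in>E. F y)"
  proof (rule dvd_sum_blocks[OF finE, of B1])
    fix y assume y: "y \<in> E"
    show "y \<in> B1 y" using generate.incl[of y "{y}" G] by (simp add: B1_def)
  next
    fix y assume y: "y \<in> E"
    show "B1 y \<subseteq> E" using gensub[OF Ec(1)[OF y]] Ec[OF y] by (auto simp: B1_def E_def)
  next
    fix y z assume y: "y \<in> E" and z: "z \<in> B1 y"
    then have zg: "z \<in> generate G {y}" and oz: "ord z = ord y" by (auto simp: B1_def)
    have "generate G {z} = generate G {y}" by (rule gen_eq[OF fin Ec(1)[OF y] zg oz])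
    then show "B1 z = B1 y" using oz by (simp add: B1_def)
  next
    fix y z assume y: "y \<in> E" and z: "z \<in> B1 y"
    then have zg: "z \<in> generate G {y}" and oz: "ord z = ord y" by (auto simp: B1_def)
    have zc: "z \<in> carrier G" using zg gensub[OF Ec(1)[OF y]] by auto
    have "generate G {z} = generate G {y}" by (rule gen_eq[OF fin Ec(1)[OF y] zg oz])
    then have "cent z = cent y" by (rule cent_eq[OF fin Ec(1)[OF y] zc])
    then show "F z = F y" by (simp add: F_def S_def)
  next
    fix y assume y: "y \<in> E"
    have "card (B1 y) = totient q" using gen_count[OF fin Ec(1)[OF y]] Ec(2)[OF y] by (simp add: B1_def)
    also have "\<dots> = p ^ a * (p - 1)" unfolding q_def by (rule totient_prime_power_Suc[OF p])
    finally show "p ^ a dvd card (B1 y) * F y" by simp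
  qed
  define B2 where "B2 = (\<lambda>y. {g \<otimes> y \<otimes> inv g | g. g \<in> carrier G})"
  have dvdm: "m dvd (\<Sum>y\<in>E. F y)"
  proof (rule dvd_sum_blocks[OF finE, of B2])
    fix y assume y: "y \<in> E"
    have "y = \<one> \<otimes> y \<otimes> inv \<one>" using Ec(1)[OF y] by simp
    then show "y \<in> B2 y" unfolding B2_def by blast
  next
    fix y assume y: "y \<in> E"
    show "B2 y \<subseteq> E" using Ec[OF y] ord_conj by (auto simp: B2_def E_def)
  next
    fix y z assume y: "y \<in> E" and z: "z \<in> B2 y"
    have yc: "y \<in> carrier G" using Ec(1)[OF y] .
    obtain h where h: "h \<in> carrier G" "z = h \<otimes> y \<otimes> inv h" using z by (auto simp: B2_def)
    have zc: "z \<in> carrier G" using h yc by simp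
    show "B2 z = B2 y"
    proof
      show "B2 z \<subseteq> B2 y"
      proof
        fix x assume "x \<in> B2 z"
        then obtain g where g: "g \<in> carrier G" "x = g \<otimes> z \<otimes> inv g" by (auto simp: B2_def)
        then have "x = (g \<otimes> h) \<otimes> y \<otimes> inv (g \<otimes> h)" using conj_conj[OF g(1) h(1) yc] h(2) by simp
        then show "x \<in> B2 y" using g h unfolding B2_def by blast
      qed
      show "B2 y \<subseteq> B2 z"
      proof
        fix x assume "x \<in> B2 y"
        then obtain g where g: "g \<in> carrier G" "x = g \<otimes> y \<otimes> inv g" by (auto simp: B2_def)
        have "y = inv h \<otimes> z \<otimes> inv (inv h)" using conj_inv_cancel[OF h(1) yc] h(2) by simp
        then have "x = (g \<otimes> inv h) \<otimes> z \<otimes> inv (g \<otimes> inv h)"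
          using conj_conj[OF g(1) inv_closed[OF h(1)] zc] g(2) by simp
        then show "x \<in> B2 z" using g h unfolding B2_def by blast
      qed
    qed
  next
    fix y z assume y: "y \<in> E" and z: "z \<in> B2 y"
    obtain h where h: "h \<in> carrier G" "z = h \<otimes> y \<otimes> inv h" using z by (auto simp: B2_def)
    show "F z = F y" unfolding F_def S_def h(2) by (rule S_conj_card[OF fin h(1) Ec(1)[OF y]])
  next
    fix y assume y: "y \<in> E"
    have yc: "y \<in> carrier G" using Ec(1)[OF y] .
    interpret A: group_action G "carrier G" "\<lambda>g. \<lambda>h\<in>carrier G. g \<otimes> h \<otimes> inv g"
      by (rule action_by_conjugation)
    have orb: "orbit G (\<lambda>g. \<lambda>h\<in>carrier G. g \<otimes> h \<otimes> inv g) y = B2 y"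
      using yc by (auto simp: orbit_def B2_def)
    have stab: "stabilizer G (\<lambda>g. \<lambda>h\<in>carrier G. g \<otimes> h \<otimes> inv g) y = cent y"
      using yc conj_fix_iff by (auto simp: stabilizer_def cent_def)
    have os: "card (B2 y) * card (cent y) = order G"
      using A.orbit_stabilizer_theorem[OF yc] orb stab by simp
    have "gcd m (card (cent y)) dvd F y"
      unfolding F_def S_def by (rule frobA[OF fin yc Ec(2)[OF y] q1 cop IH])
    moreover have "m dvd card (B2 y) * gcd m (card (cent y))"
      using dvd_mult_gcd_aux[of m "card (B2 y)" "card (cent y)"] os mG by simp
    ultimately show "m dvd card (B2 y) * F y" by (meson dvd_trans mult_dvd_mono dvd_refl)
  qed
  have "p ^ a * m dvd card D"
    using divides_mult[OF dvdp dvdm] pm p cardD by (simp add: prime_imp_coprime)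
  then have nD: "n dvd card D" using nm by simp
  have "n dvd card (Lset G (p * n))" using IHn by (meson dvd_mult_right dvd_trans)
  then show ?thesis using card12 nD by (simp add: dvd_add_left_iff)
qed

end

lemma frob_nat:
  "\<forall>G::nat monoid. group G \<longrightarrow> finite (carrier G) \<longrightarrow> card (carrier G) = N
     \<longrightarrow> (\<forall>n. n dvd N \<longrightarrow> n dvd card (Lset G n))"
proof (induction N rule: less_induct)
  case (less N)
  show ?case
  proof (intro allI impI)
    fix G :: "nat monoid" and n
    assume grp: "group G" and fin: "finite (carrier G)" and cN: "card (carrier G) = N" and nN: "n dvd N"
    interpret G: group G by (rule grp)
    have oG: "order G = N" using cN by (simp add: order_def)
    have Npos: "N > 0" using fin cN G.one_closed card_gt_0_iff by blast
    have IHQ: "\<forall>k. k dvd card (carrier Q) \<longrightarrow> k dvd card (Lset Q k)"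
      if "group Q" "finite (carrier Q)" "card (carrier Q) < order G" for Q :: "nat monoid"
      using less[of "card (carrier Q)"] that oG by blast
    show "n dvd card (Lset G n)" using nN
    proof (induction "N - n" arbitrary: n rule: less_induct)
      case (less n)
      show ?case
      proof (cases "n = N")
        case True
        have "Lset G n = carrier G" using True oG G.pow_order_eq_1 by (auto simp: Lset_def)
        then show ?thesis using True cN by simp
      next
        case False
        have npos: "n > 0" using less.prems Npos by (auto intro: gr0I)
        obtain k where k: "N = n * k" using less.prems by blast
        have "k \<noteq> 1" using False k by auto
        then obtain p where p: "prime p" "p dvd k" using prime_factor_nat by blast
        have pn: "p * n dvd N" using p k by (simp add: mult.commute mult_dvd_mono)
        have pnle: "p * n \<le> N" using pn Npos by (simp add: dvd_imp_le)
        have p1: "1 < p" using p prime_gt_1_nat by blast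
        have np: "n < p * n" using p1 npos by simp
        have "N - p * n < N - n" using pnle np by linarith
        then have IHn: "p * n dvd card (Lset G (p * n))" using less.hyps pn by blast
        show ?thesis by (rule G.frob_step[OF fin p(1) _ npos IHn IHQ]) (use pn oG in simp_all)
      qed
    qed
  qed
qed

theorem frobenius:
  assumes grp: "group G" and fin: "finite (carrier G)" and n: "n dvd order G"
  shows "n dvd card (Lset G n)"
proof -
  obtain f :: "'a \<Rightarrow> nat" where f: "inj_on f (carrier G)"
    using finite_imp_inj_to_nat_seg[OF fin] by blast
  have "group (tr f G)" by (rule tr_group[OF grp f])
  moreover have "finite (carrier (tr f G))" using fin by (simp add: tr_simps)
  ultimately have "n dvd card (Lset (tr f G) n)"
    using frob_nat[of "card (carrier G)"] tr_card[OF f] n by (simp add: order_def)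
  then show ?thesis using tr_Lset[OF grp f] by simp
qed

lemma mult_pf:
  fixes p f :: nat
  assumes p: "prime p" and f: "f \<noteq> 0" "\<not> p dvd f"
  shows "multiplicity p (p ^ i * f) = i"
proof -
  have "multiplicity p (p ^ i * f) = multiplicity p (p ^ i) + multiplicity p f"
    by (rule prime_elem_multiplicity_mult_distrib) (use p f in auto)
  also have "multiplicity p (p ^ i) = i" using p by simp
  also have "multiplicity p f = 0" by (rule not_dvd_imp_multiplicity_0[OF f(2)])
  finally show ?thesis by simp
qed

lemma coprime_ppow:
  fixes p f :: nat
  assumes p: "prime p" and f: "\<not> p dvd f"
  shows "coprime f (p ^ i)"
  using prime_imp_coprime[OF p f] by (simp add: ac_simps)

lemma dvd_ppow_decomp:
  fixes p m e b :: nat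
  assumes p: "prime p" and pm: "\<not> p dvd m" and m: "m > 0"
  shows "e dvd p ^ b * m \<longleftrightarrow> (\<exists>i\<le>b. \<exists>f. f dvd m \<and> e = p ^ i * f)"
proof
  assume e: "e dvd p ^ b * m"
  have n0: "p ^ b * m \<noteq> 0" using m p by (simp add: prime_gt_0_nat)
  have e0: "e \<noteq> 0" using e n0 by (metis dvd_0_left)
  define i where "i = multiplicity p e"
  define f where "f = e div p ^ i"
  have ef: "e = p ^ i * f" unfolding f_def i_def using multiplicity_dvd[of p e] by simp
  have pf: "\<not> p dvd f" unfolding f_def i_def by (rule multiplicity_decompose) (use e0 p not_prime_unit in auto)
  have f0: "f \<noteq> 0" using ef e0 by auto
  have "i \<le> multiplicity p (p ^ b * m)" unfolding i_def by (rule dvd_imp_multiplicity_le[OF e n0])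
  also have "\<dots> = b" by (rule mult_pf[OF p _ pm]) (use m in simp)
  finally have ib: "i \<le> b" .
  have "f dvd p ^ b * m" using e ef by (metis dvd_mult_right)
  then have "f dvd m" using coprime_ppow[OF p pf, of b] by (simp add: coprime_dvd_mult_right_iff)
  then show "\<exists>i\<le>b. \<exists>f. f dvd m \<and> e = p ^ i * f" using ib ef by blast
next
  assume "\<exists>i\<le>b. \<exists>f. f dvd m \<and> e = p ^ i * f"
  then obtain i f where "i \<le> b" "f dvd m" "e = p ^ i * f" by blast
  then show "e dvd p ^ b * m" by (simp add: le_imp_power_dvd mult_dvd_mono)
qed

lemma dvd_decomp_char:
  fixes p :: nat
  assumes p: "prime p" and f: "f \<noteq> 0" "\<not> p dvd f" and d: "\<not> p dvd d'" "d' \<noteq> 0"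
  shows "p ^ j * d' dvd p ^ i * f \<longleftrightarrow> j \<le> i \<and> d' dvd f"
proof
  assume h: "p ^ j * d' dvd p ^ i * f"
  have n0: "p ^ i * f \<noteq> 0" using f p by (simp add: prime_gt_0_nat)
  have "multiplicity p (p ^ j * d') \<le> multiplicity p (p ^ i * f)"
    by (rule dvd_imp_multiplicity_le[OF h n0])
  then have "j \<le> i" using mult_pf[OF p f] mult_pf[OF p d(2) d(1)] by simp
  moreover have "d' dvd p ^ i * f" using h by (metis dvd_mult_right)
  then have "d' dvd f" using coprime_ppow[OF p d(1), of i] by (simp add: coprime_dvd_mult_right_iff)
  ultimately show "j \<le> i \<and> d' dvd f" by simp
next
  assume "j \<le> i \<and> d' dvd f"
  then show "p ^ j * d' dvd p ^ i * f" by (simp add: le_imp_power_dvd mult_dvd_mono)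
qed

lemma totient_ppow_pos: "prime p \<Longrightarrow> totient (p ^ i) > 0"
  by (simp add: prime_gt_0_nat)

lemma totient_ppow_mono:
  assumes p: "prime p"
  shows "totient (p ^ i) \<le> totient (p ^ Suc i)"
    and "i > 0 \<or> p > 2 \<Longrightarrow> totient (p ^ i) < totient (p ^ Suc i)"
proof -
  have p2: "p \<ge> 2" using p prime_ge_2_nat by blast
  have ts: "totient (p ^ Suc i) = p ^ i * (p - 1)" by (rule totient_prime_power_Suc[OF p])
  show "totient (p ^ i) \<le> totient (p ^ Suc i)"
  proof (cases i)
    case 0 then show ?thesis using ts p2 by simp
  next
    case (Suc k)
    have "totient (p ^ i) = p ^ k * (p - 1)" using Suc totient_prime_power_Suc[OF p, of k] by simp
    also have "\<dots> \<le> p ^ i * (p - 1)" using Suc p2 by (simp add: power_increasing)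
    finally show ?thesis using ts by simp
  qed
  assume h: "i > 0 \<or> p > 2"
  show "totient (p ^ i) < totient (p ^ Suc i)"
  proof (cases i)
    case 0 then show ?thesis using ts h by simp
  next
    case (Suc k)
    have "totient (p ^ i) = p ^ k * (p - 1)" using Suc totient_prime_power_Suc[OF p, of k] by simp
    also have "\<dots> < p ^ i * (p - 1)" using Suc p2 by simp
    finally show ?thesis using ts by simp
  qed
qed

lemma telescope_u:
  fixes g :: "nat \<Rightarrow> real"
  assumes "j \<le> b"
  shows "(\<Sum>i\<in>{j..b}. (if i < b then g i - g (Suc i) else if i = b then g b else 0)) = g j"
  using assms
proof (induction "b - j" arbitrary: j)
  case 0 then show ?case by simp
next
  case (Suc k)
  then have jb: "j < b" by simp
  have "{j..b} = insert j {Suc j..b}" using jb by auto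
  then have "(\<Sum>i\<in>{j..b}. (if i < b then g i - g (Suc i) else if i = b then g b else 0))
     = (g j - g (Suc j)) + (\<Sum>i\<in>{Suc j..b}. (if i < b then g i - g (Suc i) else if i = b then g b else 0))"
    using jb by simp
  also have "(\<Sum>i\<in>{Suc j..b}. (if i < b then g i - g (Suc i) else if i = b then g b else 0)) = g (Suc j)"
    using Suc jb by simp
  finally show ?case by simp
qed

lemma W_exists:
  fixes n :: nat
  assumes "n > 0"
  shows "\<exists>W::nat \<Rightarrow> real. (\<forall>e. W e \<ge> 0) \<and> (\<forall>e. e dvd n \<longrightarrow> (odd n \<or> even e) \<longrightarrow> W e > 0) \<and>
     (\<forall>d. d dvd n \<longrightarrow> (\<Sum>e\<in>{e. e dvd n \<and> d dvd e}. W e) = 1 / real (totient d))"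
  using assms
proof (induction n rule: less_induct)
  case (less n)
  show ?case
  proof (cases "n = 1")
    case True
    have "(\<Sum>e\<in>{e. e dvd n \<and> d dvd e}. (1::real)) = 1 / real (totient d)" if "d dvd n" for d
    proof -
      have "d = 1" using that True by simp
      moreover have "{e. e dvd n \<and> d dvd e} = {1}" using True \<open>d = 1\<close> by auto
      ultimately show ?thesis by simp
    qed
    then show ?thesis by (intro exI[of _ "\<lambda>e. 1"]) auto
  next
    case False
    then have n1: "n > 1" using less.prems by simp
    obtain p where p: "prime p" "p dvd n" and p2: "even n \<Longrightarrow> p = 2"
    proof (cases "even n")
      case True then show ?thesis using that[of 2] by simp
    next
      case False
      obtain p where "prime p" "p dvd n" using prime_factor_nat n1 by (metis less_irrefl)
      then show ?thesis using that False by blast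
    qed
    have pnu: "\<not> is_unit p" using p(1) not_prime_unit by blast
    define b where "b = multiplicity p n"
    define m where "m = n div p ^ b"
    have nm: "n = p ^ b * m" unfolding m_def b_def using multiplicity_dvd[of p n] by simp
    have pm: "\<not> p dvd m" unfolding m_def b_def by (rule multiplicity_decompose) (use n1 pnu in auto)
    have b1: "b \<ge> 1" unfolding b_def using multiplicity_gt_zero_iff[of n p] p pnu n1 by simp
    have mpos: "m > 0" using nm n1 by (metis gr0I mult_0_right not_one_less_zero)
    have pb: "p ^ b > 1" using b1 prime_gt_1_nat[OF p(1)] by (metis one_less_power less_le_trans zero_less_one less_one not_less)
    have mn: "m < n" using nm pb mpos by simp
    have oddm: "odd m"
    proof (cases "even n")
      case True then show ?thesis using pm p2 by simp
    next
      case False then show ?thesis using nm by auto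
    qed
    obtain W0 where W0: "\<forall>e. W0 e \<ge> 0" "\<forall>e. e dvd m \<longrightarrow> (odd m \<or> even e) \<longrightarrow> W0 e > 0"
      "\<forall>d. d dvd m \<longrightarrow> (\<Sum>e\<in>{e. e dvd m \<and> d dvd e}. W0 e) = 1 / real (totient d)"
      using less.IH[OF mn mpos] by blast
    define g where "g = (\<lambda>i. 1 / real (totient (p ^ i)))"
    define u where "u = (\<lambda>i. if i < b then g i - g (Suc i) else if i = b then g b else 0)"
    define W where "W = (\<lambda>e. u (multiplicity p e) * W0 (e div p ^ multiplicity p e))"
    have tpos: "real (totient (p ^ i)) > 0" for i using totient_ppow_pos[OF p(1)] by simp
    have u0: "u i \<ge> 0" for i
    proof -
      have "g (Suc i) \<le> g i" unfolding g_def using tpos totient_ppow_mono(1)[OF p(1), of i]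
        by (simp add: frac_le)
      then show ?thesis using tpos by (simp add: u_def g_def)
    qed
    have upos: "u i > 0" if "i \<le> b" "i > 0 \<or> p > 2" for i
    proof (cases "i = b")
      case True then show ?thesis using tpos by (simp add: u_def g_def)
    next
      case False
      have "g (Suc i) < g i" unfolding g_def using tpos totient_ppow_mono(2)[OF p(1) that(2)]
        by (simp add: frac_less2)
      then show ?thesis using False that by (simp add: u_def)
    qed
    have f0: "f \<noteq> 0" if "f dvd m" for f using that mpos by auto
    have pf: "\<not> p dvd f" if "f dvd m" for f using that pm dvd_trans by blast
    have Wpf: "W (p ^ i * f) = u i * W0 f" if "f dvd m" for i f
    proof -
      have "multiplicity p (p ^ i * f) = i" by (rule mult_pf[OF p(1) f0[OF that] pf[OF that]])
      moreover have "p ^ i * f div p ^ i = f" using p(1) by (simp add: prime_gt_0_nat)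
      ultimately show ?thesis by (simp add: W_def)
    qed
    have decomp: "e dvd n \<longleftrightarrow> (\<exists>i\<le>b. \<exists>f. f dvd m \<and> e = p ^ i * f)" for e
      unfolding nm by (rule dvd_ppow_decomp[OF p(1) pm mpos])
    show ?thesis
    proof (intro exI[of _ W] conjI allI impI)
      fix e show "W e \<ge> 0" unfolding W_def using u0 W0(1) by simp
    next
      fix e assume e: "e dvd n" and par: "odd n \<or> even e"
      obtain i f where i: "i \<le> b" "f dvd m" "e = p ^ i * f" using e decomp by blast
      have "i > 0 \<or> p > 2"
      proof (cases "even n")
        case True
        then have "even e" using par by simp
        then have "i > 0" using i p2[OF True] pf[OF i(2)] by (cases i) auto
        then show ?thesis by simp
      next
        case False
        then have "p \<noteq> 2" using p(2) by auto
        then show ?thesis using prime_ge_2_nat[OF p(1)] by simp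
      qed
      then have "u i > 0" using upos i(1) by simp
      moreover have "W0 f > 0" using W0(2) i(2) oddm by simp
      ultimately show "W e > 0" using Wpf[OF i(2)] i(3) by simp
    next
      fix d assume d: "d dvd n"
      obtain j d' where j: "j \<le> b" "d' dvd m" "d = p ^ j * d'" using d decomp by blast
      define A where "A = {j..b} \<times> {f. f dvd m \<and> d' dvd f}"
      have setq: "{e. e dvd n \<and> d dvd e} = (\<lambda>(i, f). p ^ i * f) ` A"
      proof (rule Set.set_eqI, rule iffI)
        fix e assume "e \<in> {e. e dvd n \<and> d dvd e}"
        then have e: "e dvd n" "d dvd e" by auto
        obtain i f where i: "i \<le> b" "f dvd m" "e = p ^ i * f" using e decomp by blast
        have "j \<le> i \<and> d' dvd f"
          using e(2) i(3) j(3) dvd_decomp_char[OF p(1) f0[OF i(2)] pf[OF i(2)] pf[OF j(2)] f0[OF j(2)]]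
          by simp
        then show "e \<in> (\<lambda>(i, f). p ^ i * f) ` A" using i by (auto simp: A_def)
      next
        fix e assume "e \<in> (\<lambda>(i, f). p ^ i * f) ` A"
        then obtain i f where i: "j \<le> i" "i \<le> b" "f dvd m" "d' dvd f" "e = p ^ i * f"
          by (auto simp: A_def)
        have "e dvd n" using decomp i by blast
        moreover have "d dvd e"
          using dvd_decomp_char[OF p(1) f0[OF i(3)] pf[OF i(3)] pf[OF j(2)] f0[OF j(2)]] i j(3) by simp
        ultimately show "e \<in> {e. e dvd n \<and> d dvd e}" by simp
      qed
      have inj: "inj_on (\<lambda>(i, f). p ^ i * f) A"
      proof (rule inj_onI, clarify)
        fix i f i' f' assume h: "(i, f) \<in> A" "(i', f') \<in> A" "p ^ i * f = p ^ i' * f'"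
        have fm: "f dvd m" "f' dvd m" using h(1,2) by (auto simp: A_def)
        have "i = i'" using mult_pf[OF p(1) f0[OF fm(1)] pf[OF fm(1)], of i]
          mult_pf[OF p(1) f0[OF fm(2)] pf[OF fm(2)], of i'] h(3) by simp
        then show "i = i' \<and> f = f'" using h(3) p(1) by (simp add: prime_gt_0_nat)
      qed
      have finB: "finite {f. f dvd m \<and> d' dvd f}" using mpos by simp
      have "(\<Sum>e\<in>{e. e dvd n \<and> d dvd e}. W e) = (\<Sum>x\<in>A. W ((\<lambda>(i, f). p ^ i * f) x))"
        unfolding setq using sum.reindex[OF inj, of W] by (simp add: comp_def)
      also have "\<dots> = (\<Sum>(i, f)\<in>A. u i * W0 f)"
        by (rule sum.cong[OF refl]) (auto simp: A_def Wpf)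
      also have "\<dots> = (\<Sum>i\<in>{j..b}. u i) * (\<Sum>f\<in>{f. f dvd m \<and> d' dvd f}. W0 f)"
        unfolding A_def by (simp add: sum_product sum.cartesian_product)
      also have "(\<Sum>i\<in>{j..b}. u i) = g j" unfolding u_def by (rule telescope_u[OF j(1)])
      also have "(\<Sum>f\<in>{f. f dvd m \<and> d' dvd f}. W0 f) = 1 / real (totient d')"
        using W0(3) j(2) by simp
      also have "g j * (1 / real (totient d')) = 1 / real (totient d)"
      proof -
        have "totient d = totient (p ^ j) * totient d'"
          unfolding j(3) by (rule totient_mult_coprime) (use coprime_ppow[OF p(1) pf[OF j(2)], of j] in \<open>simp add: ac_simps\<close>)
        then show ?thesis by (simp add: g_def)
      qed
      finally show "(\<Sum>e\<in>{e. e dvd n \<and> d dvd e}. W e) = 1 / real (totient d)" .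
    qed
  qed
qed

lemma W_divcount:
  fixes n :: nat and W :: "nat \<Rightarrow> real"
  assumes n: "n > 0" and WS: "\<forall>d. d dvd n \<longrightarrow> (\<Sum>e\<in>{e. e dvd n \<and> d dvd e}. W e) = 1 / real (totient d)"
  shows "(\<Sum>e\<in>{e. e dvd n}. W e * real e) = real (card {e. e dvd n})"
proof -
  define Dn where "Dn = {e. e dvd n}"
  have finD: "finite Dn" using n by (simp add: Dn_def)
  have "(\<Sum>e\<in>Dn. W e * real e) = (\<Sum>e\<in>Dn. \<Sum>d\<in>{d. d \<in> Dn \<and> d dvd e}. W e * real (totient d))"
  proof (rule sum.cong[OF refl])
    fix e assume e: "e \<in> Dn"
    have "{d. d \<in> Dn \<and> d dvd e} = {d. d dvd e}" using e by (auto simp: Dn_def intro: dvd_trans)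
    moreover have "real e = (\<Sum>d | d dvd e. real (totient d))"
      using totient_divisor_sum[of e] by (metis of_nat_sum)
    ultimately show "W e * real e = (\<Sum>d\<in>{d. d \<in> Dn \<and> d dvd e}. W e * real (totient d))"
      by (simp add: sum_distrib_left)
  qed
  also have "\<dots> = (\<Sum>d\<in>Dn. \<Sum>e\<in>{e. e \<in> Dn \<and> d dvd e}. W e * real (totient d))"
    by (rule sum.swap_restrict[OF finD finD])
  also have "\<dots> = (\<Sum>d\<in>Dn. 1)"
  proof (rule sum.cong[OF refl])
    fix d assume d: "d \<in> Dn"
    have d0: "d > 0" using d n by (auto simp: Dn_def intro: gr0I)
    have "(\<Sum>e\<in>{e. e \<in> Dn \<and> d dvd e}. W e * real (totient d)) = (\<Sum>e\<in>{e. e \<in> Dn \<and> d dvd e}. W e) * real (totient d)"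
      by (simp add: sum_distrib_right)
    also have "\<dots> = 1 / real (totient d) * real (totient d)" using WS d by (simp add: Dn_def)
    also have "\<dots> = 1" using d0 by simp
    finally show "(\<Sum>e\<in>{e. e \<in> Dn \<and> d dvd e}. W e * real (totient d)) = 1" .
  qed
  finally show ?thesis by (simp add: Dn_def)
qed

lemma W_elems:
  fixes n :: nat and W :: "nat \<Rightarrow> real" and X :: "'x set" and ord' :: "'x \<Rightarrow> nat"
  assumes n: "n > 0" and WS: "\<forall>d. d dvd n \<longrightarrow> (\<Sum>e\<in>{e. e dvd n \<and> d dvd e}. W e) = 1 / real (totient d)"
    and finX: "finite X" and o: "\<forall>x\<in>X. ord' x dvd n"
  shows "(\<Sum>x\<in>X. 1 / real (totient (ord' x))) = (\<Sum>e\<in>{e. e dvd n}. W e * real (card {x\<in>X. ord' x dvd e}))"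
proof -
  define Dn where "Dn = {e. e dvd n}"
  have finD: "finite Dn" using n by (simp add: Dn_def)
  have "(\<Sum>e\<in>Dn. W e * real (card {x\<in>X. ord' x dvd e})) = (\<Sum>e\<in>Dn. \<Sum>x\<in>{x. x \<in> X \<and> ord' x dvd e}. W e)"
    by (simp add: mult.commute)
  also have "\<dots> = (\<Sum>x\<in>X. \<Sum>e\<in>{e. e \<in> Dn \<and> ord' x dvd e}. W e)"
    by (rule sum.swap_restrict[OF finD finX])
  also have "\<dots> = (\<Sum>x\<in>X. 1 / real (totient (ord' x)))"
    using WS o by (simp add: Dn_def)
  finally show ?thesis by (simp add: Dn_def)
qed

context group begin

lemma gen_sub_carrier: "y \<in> carrier G \<Longrightarrow> generate G {y} \<subseteq> carrier G"
  using generate_is_subgroup[of "{y}"] subgroup.subset by auto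

lemma cyc_count:
  assumes fin: "finite (carrier G)"
  shows "real (card (cyclic_subgroups G)) = (\<Sum>x\<in>carrier G. 1 / real (totient (ord x)))"
proof -
  define h where "h = (\<lambda>a. generate G {a})"
  have cs: "cyclic_subgroups G = h ` carrier G" by (auto simp: cyclic_subgroups_def h_def)
  have "(\<Sum>x\<in>carrier G. 1 / real (totient (ord x)))
      = (\<Sum>H\<in>h ` carrier G. \<Sum>x\<in>{x. x \<in> carrier G \<and> h x = H}. 1 / real (totient (ord x)))"
    by (rule sum.image_gen[OF fin])
  also have "\<dots> = (\<Sum>H\<in>h ` carrier G. 1)"
  proof (rule sum.cong[OF refl])
    fix H assume "H \<in> h ` carrier G"
    then obtain y where y: "y \<in> carrier G" "H = h y" by auto
    have eq: "{x. x \<in> carrier G \<and> h x = H} = {x \<in> generate G {y}. ord x = ord y}"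
    proof (rule Set.set_eqI, rule iffI)
      fix x assume "x \<in> {x. x \<in> carrier G \<and> h x = H}"
      then have x: "x \<in> carrier G" "generate G {x} = generate G {y}" using y by (auto simp: h_def)
      have "x \<in> generate G {y}" using x(2) generate.incl[of x "{x}" G] by auto
      moreover have "ord x = ord y" using generate_pow_card[OF x(1)] generate_pow_card[OF y(1)] x(2) by simp
      ultimately show "x \<in> {x \<in> generate G {y}. ord x = ord y}" by simp
    next
      fix x assume "x \<in> {x \<in> generate G {y}. ord x = ord y}"
      then have x: "x \<in> generate G {y}" "ord x = ord y" by auto
      have "x \<in> carrier G" using x(1) gen_sub_carrier[OF y(1)] by auto
      moreover have "generate G {x} = generate G {y}" by (rule gen_eq[OF fin y(1) x])
      ultimately show "x \<in> {x. x \<in> carrier G \<and> h x = H}" using y by (simp add: h_def)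
    qed
    have "(\<Sum>x\<in>{x \<in> generate G {y}. ord x = ord y}. 1 / real (totient (ord x)))
        = (\<Sum>x\<in>{x \<in> generate G {y}. ord x = ord y}. 1 / real (totient (ord y)))" by simp
    also have "\<dots> = real (totient (ord y)) * (1 / real (totient (ord y)))"
      using gen_count[OF fin y(1)] by simp
    also have "\<dots> = 1"
    proof -
      have "ord y > 0" using ord_ge_1[OF fin y(1)] by simp
      then have "totient (ord y) > 0" by simp
      then show ?thesis by simp
    qed
    finally have "(\<Sum>x\<in>{x \<in> generate G {y}. ord x = ord y}. 1 / real (totient (ord x))) = 1" .
    then show "(\<Sum>x\<in>{x. x \<in> carrier G \<and> h x = H}. 1 / real (totient (ord x))) = 1"
      by (simp only: eq)
  qed
  also have "\<dots> = real (card (h ` carrier G))" by simp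
  finally show ?thesis using cs by simp
qed

lemma Lset_ord: "Lset G e = {x \<in> carrier G. ord x dvd e}"
  using pow_eq_id by (auto simp: Lset_def)

lemma s_ge:
  assumes fin: "finite (carrier G)" and e: "e dvd order G"
  shows "card (Lset G e) \<ge> e" and "e dvd card (Lset G e)"
proof -
  show ed: "e dvd card (Lset G e)" by (rule frobenius[OF is_group fin e])
  have "\<one> \<in> Lset G e" by (simp add: Lset_def)
  moreover have "finite (Lset G e)" using fin by (rule finite_subset[rotated]) (auto simp: Lset_def)
  ultimately have "card (Lset G e) > 0" by (auto simp: card_gt_0_iff)
  then show "card (Lset G e) \<ge> e" using ed by (simp add: dvd_imp_le)
qed

lemma cyclic_s:
  assumes fin: "finite (carrier G)" and cyc: "cyclic_group G" and e: "e dvd order G"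
  shows "card (Lset G e) = e"
proof -
  obtain x where x: "x \<in> carrier G" "subgroup_generated G {x} = G" using cyc by (auto simp: cyclic_group_def)
  have gx: "generate G {x} = carrier G"
    using arg_cong[OF x(2), of carrier] x(1) by (simp add: carrier_subgroup_generated)
  define n where "n = order G"
  have on: "ord x = n" using generate_pow_card[OF x(1)] gx by (simp add: n_def order_def)
  have npos: "n > 0" using ord_ge_1[OF fin x(1)] on by simp
  have epos: "e > 0" using e npos n_def by (auto intro: gr0I)
  define r where "r = n div e"
  have nr: "n = r * e" using e by (simp add: r_def n_def)
  have "Lset G e \<subseteq> (\<lambda>j. x [^] (j * r)) ` {..<e}"
  proof
    fix z assume z: "z \<in> Lset G e"
    then have zc: "z \<in> carrier G" and ze: "z [^] e = \<one>" by (auto simp: Lset_def)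
    have "z \<in> {x [^] k | k. k \<in> {0..ord x - 1}}"
      using zc gx generate_pow_on_finite_carrier[OF fin x(1)] ord_elems[OF fin x(1)] by auto
    then obtain k where k: "k \<le> n - 1" "z = x [^] k" using on by auto
    have "x [^] (k * e) = \<one>" using ze k(2) x(1) by (simp add: nat_pow_pow)
    then have "n dvd k * e" using pow_eq_id[OF x(1)] on by simp
    then have "r dvd k" using nr epos by (simp add: dvd_mult_cancel2 mult.commute)
    then obtain j where j: "k = r * j" by blast
    have "j < e"
    proof (rule ccontr)
      assume "\<not> j < e"
      then have "r * e \<le> r * j" by simp
      moreover have "r * e > 0" using nr npos by simp
      ultimately show False using k(1) j nr by linarith
    qed
    then show "z \<in> (\<lambda>j. x [^] (j * r)) ` {..<e}" using k(2) j by (auto simp: mult.commute)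
  qed
  then have "card (Lset G e) \<le> e" using card_image_le[of "{..<e}" "\<lambda>j. x [^] (j * r)"]
    by (metis card_lessThan card_mono finite_imageI finite_lessThan le_trans)
  then show ?thesis using s_ge(1)[OF fin e] by simp
qed

end

context group begin

lemma exists_ord_n:
  assumes fin: "finite (carrier G)" and all: "\<forall>e. e dvd order G \<longrightarrow> card (Lset G e) = e"
  shows "\<exists>x\<in>carrier G. ord x = order G"
proof -
  define n where "n = order G"
  define t where "t = (\<lambda>d. card {x \<in> carrier G. ord x = d})"
  have npos: "n > 0" using fin by (simp add: n_def order_gt_0_iff_finite)
  have split: "card (Lset G e) = (\<Sum>d\<in>{d. d dvd e}. t d)" if "e > 0" for e
  proof -
    have "Lset G e = (\<Union>d\<in>{d. d dvd e}. {x \<in> carrier G. ord x = d})"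
      by (auto simp: Lset_ord)
    moreover have "card (\<Union>d\<in>{d. d dvd e}. {x \<in> carrier G. ord x = d}) = (\<Sum>d\<in>{d. d dvd e}. t d)"
      unfolding t_def by (rule card_UN_disjoint) (use that fin in auto)
    ultimately show ?thesis by simp
  qed
  have teq: "e dvd n \<longrightarrow> t e = totient e" for e
  proof (induction e rule: less_induct)
    case (less e)
    show ?case
    proof
      assume en: "e dvd n"
      have epos: "e > 0" using en npos by (auto intro: gr0I)
      have fD: "finite {d. d dvd e}" using epos by simp
      have eD: "e \<in> {d. d dvd e}" by simp
      have rest: "(\<Sum>d\<in>{d. d dvd e} - {e}. t d) = (\<Sum>d\<in>{d. d dvd e} - {e}. totient d)"
      proof (rule sum.cong[OF refl])
        fix d assume d: "d \<in> {d. d dvd e} - {e}"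
        then have "d < e" using epos by (auto simp: dvd_imp_le le_neq_implies_less)
        moreover have "d dvd n" using d en by (auto intro: dvd_trans)
        ultimately show "t d = totient d" using less.IH by blast
      qed
      have "t e + (\<Sum>d\<in>{d. d dvd e} - {e}. t d) = card (Lset G e)"
        using split[OF epos] sum.remove[OF fD eD, of t] by simp
      also have "\<dots> = e" using all en by (simp add: n_def)
      also have "\<dots> = totient e + (\<Sum>d\<in>{d. d dvd e} - {e}. totient d)"
        using totient_divisor_sum[of e] sum.remove[OF fD eD, of totient] by simp
      finally show "t e = totient e" using rest by simp
    qed
  qed
  then have "t n = totient n" by simp
  then have "t n > 0" using npos by simp
  then have "{x \<in> carrier G. ord x = n} \<noteq> {}" unfolding t_def by (metis card.empty less_irrefl)
  then show ?thesis by (auto simp: n_def)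
qed

lemma ord_n_cyclic:
  assumes fin: "finite (carrier G)" and x: "x \<in> carrier G" and o: "ord x = order G"
  shows "cyclic_group G"
proof -
  have "generate G {x} = carrier G"
    using card_subset_eq[OF fin gen_sub_carrier[OF x]] generate_pow_card[OF x] o by (simp add: order_def)
  then have "subgroup_generated G {x} = G" using x by (simp add: subgroup_generated_def)
  then show ?thesis using x by (auto simp: cyclic_group_def)
qed

lemma noncyc_witness:
  assumes fin: "finite (carrier G)" and nc: "\<not> cyclic_group G"
  shows "\<exists>e. e dvd order G \<and> (odd (order G) \<or> even e) \<and> card (Lset G e) > e"
proof (rule ccontr)
  assume "\<not> ?thesis"
  then have le: "card (Lset G e) \<le> e" if "e dvd order G" "odd (order G) \<or> even e" for e
    using that by (meson not_less)
  define n where "n = order G"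
  have finL: "finite (Lset G e)" for e using fin by (rule finite_subset[rotated]) (auto simp: Lset_def)
  have eq1: "card (Lset G e) = e" if "e dvd n" "odd n \<or> even e" for e
    using le[of e] s_ge(1)[OF fin, of e] that by (simp add: n_def)
  have all: "card (Lset G e) = e" if en: "e dvd n" for e
  proof (cases "odd n \<or> even e")
    case True then show ?thesis using eq1 en by simp
  next
    case False
    then have evn: "even n" and oe: "odd e" by auto
    have "2 * e dvd n" using evn en oe by (simp add: divides_mult)
    then have c2: "card (Lset G (2 * e)) = 2 * e" using eq1 by simp
    have sub: "Lset G e \<subseteq> Lset G (2 * e)"
      by (auto simp: Lset_def nat_pow_pow[symmetric] mult.commute[of 2 e] simp del: nat_pow_pow)
    have "card (Lset G e) \<le> 2 * e" using card_mono[OF finL sub] c2 by simp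
    moreover have "e dvd card (Lset G e)" using s_ge(2)[OF fin, of e] en by (simp add: n_def)
    moreover have "card (Lset G e) \<ge> e" using s_ge(1)[OF fin, of e] en by (simp add: n_def)
    moreover have "card (Lset G e) \<noteq> 2 * e"
    proof
      assume h: "card (Lset G e) = 2 * e"
      then have LL: "Lset G e = Lset G (2 * e)" using card_subset_eq[OF finL sub] c2 by simp
      have "2 dvd n" using evn by simp
      then have "card (Lset G 2) \<ge> 2" using s_ge(1)[OF fin, of 2] by (simp add: n_def)
      then obtain z where z: "z \<in> Lset G 2" "z \<noteq> \<one>"
      proof -
        have "Lset G 2 \<noteq> {\<one>}" using \<open>card (Lset G 2) \<ge> 2\<close> by auto
        moreover have "\<one> \<in> Lset G 2" by (simp add: Lset_def)
        ultimately show ?thesis using that by blast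
      qed
      have zc: "z \<in> carrier G" and z2: "z [^] (2::nat) = \<one>" using z by (auto simp: Lset_def)
      have "z \<in> Lset G (2 * e)" using zc z2 by (simp add: Lset_def nat_pow_pow[symmetric])
      then have "z \<in> Lset G e" using LL by simp
      then have "z [^] e = \<one>" by (simp add: Lset_def)
      then have "z = \<one>" using coprime_pow_one[OF zc _ z2] oe by simp
      with z show False by simp
    qed
    ultimately show ?thesis
    proof -
      assume a: "card (Lset G e) \<le> 2 * e" "e dvd card (Lset G e)" "card (Lset G e) \<ge> e" "card (Lset G e) \<noteq> 2 * e"
      obtain k where k: "card (Lset G e) = e * k" using a(2) by blast
      have epos: "e > 0" using en fin by (metis gr0I dvd_0_left n_def order_gt_0_iff_finite less_irrefl)
      have "k \<le> 2" using a(1) k epos by simp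
      moreover have "k \<ge> 1" using a(3) k epos by (cases k) auto
      moreover have "k \<noteq> 2" using a(4) k by simp
      ultimately have "k = 1" by simp
      then show ?thesis using k by simp
    qed
  qed
  obtain x where "x \<in> carrier G" "ord x = order G" using exists_ord_n[OF fin] all by (auto simp: n_def)
  then have "cyclic_group G" using ord_n_cyclic[OF fin] by simp
  with nc show False by simp
qed

end

theorem theorem1p2:
  fixes G :: "('a, 'b) monoid_scheme"
  assumes "group G" and "finite (carrier G)"
  shows "card (cyclic_subgroups G) \<ge> num_divisors (order G) \<and>
         (card (cyclic_subgroups G) = num_divisors (order G) \<longleftrightarrow> cyclic_group G)"
proof -
  interpret G: group G by (rule assms(1))
  have fin: "finite (carrier G)" by (rule assms(2))
  define n where "n = order G"
  have npos: "n > 0" using fin by (simp add: n_def G.order_gt_0_iff_finite)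
  obtain W :: "nat \<Rightarrow> real" where W0: "\<forall>e. W e \<ge> 0"
    and Wpos: "\<forall>e. e dvd n \<longrightarrow> (odd n \<or> even e) \<longrightarrow> W e > 0"
    and WS: "\<forall>d. d dvd n \<longrightarrow> (\<Sum>e\<in>{e. e dvd n \<and> d dvd e}. W e) = 1 / real (totient d)"
    using W_exists[OF npos] by blast
  define Dn where "Dn = {e. e dvd n}"
  have finD: "finite Dn" using npos by (simp add: Dn_def)
  have cc: "real (card (cyclic_subgroups G)) = (\<Sum>e\<in>Dn. W e * real (card (Lset G e)))"
  proof -
    have "real (card (cyclic_subgroups G)) = (\<Sum>x\<in>carrier G. 1 / real (totient (G.ord x)))"
      by (rule G.cyc_count[OF fin])
    also have "\<dots> = (\<Sum>e\<in>{e. e dvd n}. W e * real (card {x\<in>carrier G. G.ord x dvd e}))"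
      by (rule W_elems[OF npos WS fin]) (use G.ord_dvd_group_order in \<open>simp add: n_def\<close>)
    finally show ?thesis by (simp add: Dn_def G.Lset_ord)
  qed
  have dn: "(\<Sum>e\<in>Dn. W e * real e) = real (num_divisors n)"
    unfolding Dn_def num_divisors_def by (rule W_divcount[OF npos WS])
  have le: "W e * real e \<le> W e * real (card (Lset G e))" if "e \<in> Dn" for e
    using W0 G.s_ge(1)[OF fin, of e] that by (simp add: Dn_def n_def mult_left_mono)
  have ge: "real (num_divisors n) \<le> real (card (cyclic_subgroups G))"
    unfolding cc dn[symmetric] by (rule sum_mono[OF le])
  have iff: "card (cyclic_subgroups G) = num_divisors n \<longleftrightarrow> cyclic_group G"
  proof
    assume eq: "card (cyclic_subgroups G) = num_divisors n"
    show "cyclic_group G"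
    proof (rule ccontr)
      assume nc: "\<not> cyclic_group G"
      obtain e where e: "e dvd n" "odd n \<or> even e" "card (Lset G e) > e"
        using G.noncyc_witness[OF fin nc] by (auto simp: n_def)
      have "W e * real e < W e * real (card (Lset G e))"
        using Wpos e by simp
      then have "(\<Sum>e\<in>Dn. W e * real e) < (\<Sum>e\<in>Dn. W e * real (card (Lset G e)))"
        using e(1) by (intro sum_strict_mono_ex1[OF finD]) (use le in \<open>auto simp: Dn_def\<close>)
      then show False using eq cc dn by simp
    qed
  next
    assume cyc: "cyclic_group G"
    have "(\<Sum>e\<in>Dn. W e * real (card (Lset G e))) = (\<Sum>e\<in>Dn. W e * real e)"
      by (rule sum.cong[OF refl]) (use G.cyclic_s[OF fin cyc] in \<open>simp add: Dn_def n_def\<close>)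
    then show "card (cyclic_subgroups G) = num_divisors n" using cc dn by simp
  qed
  show ?thesis using ge iff by (simp add: n_def)
qed

end
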